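(* Let $H$ be a bialgebra over a commutative ring $\Bbbk$ and $A$ a left $H$-module algebra. Then the maps $\Phi:H^{\otimes n}\to\mathrm{Hom}_\Bbbk(A^{\otimes n},A)$, $\Phi(h_1\otimes\dots\otimes h_n)(a_1\otimes\dots\otimes a_n)=(h_1.a_1)\cdots(h_n.a_n)$, define a morphism of linear operads with multiplication from the operad $\mathcal{O}_H$ (whose cochain complex is the cobar construction $\Omega H$) to the endomorphism operad $\mathcal{E}nd(A)$. In particular $\Phi$ induces a morphism of Gerstenhaber algebras $H^*(\Phi):\mathrm{Cotor}^*_H(\Bbbk,\Bbbk)\to HH^*(A,A)$.
   Context: A left $H$-module algebra is an algebra $A$ with a left $H$-module structure such that $h.(ab)=(h^{(1)}.a)(h^{(2).}b)$ and $h.1_A=\varepsilon(h)1_A$. $\mathcal{O}_H(n)=H^{\otimes n}$ with $(a_1\otimes\dots\otimes a_m)\circ_i(b_1\otimes\dots\otimes b_n)=a_1\otimes\dots\otimes a_{i-1}\otimes a_i^{(1)}b_1\otimes\dots\otimes a_i^{(n)}b_n\otimes a_{i+1}\otimes\dots\otimes a_m$ (with $\Delta^{n-1}(a_i)=a_i^{(1)}\otimes\dots\otimes a_i^{(n)}$), identity $1_H$, multiplication $1_H\otimes1_H$, $e=1\in\Bbbk$. $\mathcal{E}nd(A)(n)=\mathrm{Hom}(A^{\otimes n},A)$ with $\gamma(f;g_1,\dots,g_n)=f\circ(g_1\otimes\dots\otimes g_n)$, identity $\mathrm{id}_A$, multiplication the product of $A$, $e$ the unit $\Bbbk\to A$.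 For an operad with multiplication $(O,\mu,e)$, the cohomology of the cochain complex ($df=\mu\circ_2f+\sum_i(-1)^if\circ_i\mu+(-1)^{n+1}\mu\circ_1f$) is a Gerstenhaber algebra with cup product $(\mu\circ_1f)\circ_{m+1}g$ and bracket $\{f,g\}=f\bar\circ g-(-1)^{(m-1)(n-1)}g\bar\circ f$, $f\bar\circ g=(-1)^{(m-1)(n-1)}\sum_i(-1)^{(n-1)(i-1)}f\circ_ig$; for $\mathcal{O}_H$ this gives $\mathrm{Cotor}^*_H(\Bbbk,\Bbbk)$ and for $\mathcal{E}nd(A)$ it gives $HH^*(A,A)$. *)

theory Defs
  imports Main
begin

text \<open>The bialgebra H is
a type 'h whose ring structure (ab_group_add + ring_1) is the algebra structure of H, with
an explicit scalar multiplication sH.  Likewise the algebra A is a type 'a with scalar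
multiplication sA.  Elements of the tensor power H^n are represented by finite formal
k-linear combinations of pure tensors, i.e. lists of pairs (c, [h1,...,hn]); two
representatives are identified (teq) iff their difference lies in the k-submodule of the
free k-module on 'h list spanned by the multilinearity relations (the usual construction of
the tensor product).  The coproduct is given as a representative in H^2 for each h.
End(A)(n) = Hom(A^n, A) is identified (universal property of the tensor product) with
k-multilinear maps 'a list => 'a, considered on lists of length n.\<close>

type_synonym ('k, 'h) tens = "('k \<times> 'h list) list"

definition basis :: "'h list \<Rightarrow> 'h list \<Rightarrow> 'k::comm_ring_1" where
  "basis t t' = (if t' = t then 1 else 0)"

inductive_set tens_rel :: "('k::comm_ring_1 \<Rightarrow> 'h::ab_group_add \<Rightarrow> 'h) \<Rightarrow> ('h list \<Rightarrow> 'k) set"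
  for sH where
  zero: "(\<lambda>_. 0) \<in> tens_rel sH"
| add: "u \<in> tens_rel sH \<Longrightarrow> v \<in> tens_rel sH \<Longrightarrow> (\<lambda>t. u t + v t) \<in> tens_rel sH"
| smult: "u \<in> tens_rel sH \<Longrightarrow> (\<lambda>t. c * u t) \<in> tens_rel sH"
| addgen: "(\<lambda>t. basis (xs @ (a + b) # ys) t - basis (xs @ a # ys) t - basis (xs @ b # ys) t)
             \<in> tens_rel sH"
| smultgen: "(\<lambda>t. basis (xs @ sH c a # ys) t - c * basis (xs @ a # ys) t) \<in> tens_rel sH"

definition fs :: "('k::comm_ring_1, 'h) tens \<Rightarrow> 'h list \<Rightarrow> 'k" where
  "fs x t = sum_list (map fst (filter (\<lambda>p. snd p = t) x))"

definition teq :: "('k::comm_ring_1 \<Rightarrow> 'h::ab_group_add \<Rightarrow> 'h) \<Rightarrow> ('k, 'h) tens \<Rightarrow> ('k, 'h) tens \<Rightarrow> bool" where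
  "teq sH x y \<longleftrightarrow> (\<lambda>t. fs x t - fs y t) \<in> tens_rel sH"

definition tarity :: "nat \<Rightarrow> ('k, 'h) tens \<Rightarrow> bool" where
  "tarity n x \<longleftrightarrow> (\<forall>p\<in>set x. length (snd p) = n)"

definition tscale :: "'k::comm_ring_1 \<Rightarrow> ('k, 'h) tens \<Rightarrow> ('k, 'h) tens" where
  "tscale c x = map (\<lambda>(d, t). (c * d, t)) x"

definition tmult :: "('k::comm_ring_1, 'h::ring_1) tens \<Rightarrow> ('k, 'h) tens \<Rightarrow> ('k, 'h) tens" where
  "tmult x y = concat (map (\<lambda>(c, us). map (\<lambda>(d, vs). (c * d, map2 (*) us vs)) y) x)"

text \<open>(Delta tensor id) and (id tensor Delta) applied to an element of H tensor H.\<close>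
definition tensL :: "('h \<Rightarrow> ('k::comm_ring_1, 'h) tens) \<Rightarrow> ('k, 'h) tens \<Rightarrow> ('k, 'h) tens" where
  "tensL D x = concat (map (\<lambda>(c, ts). map (\<lambda>(d, us). (c * d, us @ [ts ! 1])) (D (ts ! 0))) x)"

definition tensR :: "('h \<Rightarrow> ('k::comm_ring_1, 'h) tens) \<Rightarrow> ('k, 'h) tens \<Rightarrow> ('k, 'h) tens" where
  "tensR D x = concat (map (\<lambda>(c, ts). map (\<lambda>(d, us). (c * d, (ts ! 0) # us)) (D (ts ! 1))) x)"

definition is_kmodule :: "('k::comm_ring_1 \<Rightarrow> 'm::ab_group_add \<Rightarrow> 'm) \<Rightarrow> bool" where
  "is_kmodule s \<longleftrightarrow>
     (\<forall>c d x. s (c + d) x = s c x + s d x) \<and>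
     (\<forall>c x y. s c (x + y) = s c x + s c y) \<and>
     (\<forall>c d x. s (c * d) x = s c (s d x)) \<and>
     (\<forall>x. s 1 x = x)"

definition is_kalgebra :: "('k::comm_ring_1 \<Rightarrow> 'm::ring_1 \<Rightarrow> 'm) \<Rightarrow> bool" where
  "is_kalgebra s \<longleftrightarrow> is_kmodule s \<and>
     (\<forall>c x y. s c (x * y) = s c x * y \<and> s c (x * y) = x * s c y)"

definition is_bialgebra ::
  "('k::comm_ring_1 \<Rightarrow> 'h::ring_1 \<Rightarrow> 'h) \<Rightarrow> ('h \<Rightarrow> ('k, 'h) tens) \<Rightarrow> ('h \<Rightarrow> 'k) \<Rightarrow> bool" where
  "is_bialgebra sH D eps \<longleftrightarrow>
     is_kalgebra sH \<and>
     \<comment> \<open>coproduct: a k-linear map H -> H tensor H\<close>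
     (\<forall>h. tarity 2 (D h)) \<and>
     (\<forall>g h. teq sH (D (g + h)) (D g @ D h)) \<and>
     (\<forall>c h. teq sH (D (sH c h)) (tscale c (D h))) \<and>
     \<comment> \<open>coassociativity\<close>
     (\<forall>h. teq sH (tensL D (D h)) (tensR D (D h))) \<and>
     \<comment> \<open>counit: a k-linear map H -> k\<close>
     (\<forall>g h. eps (g + h) = eps g + eps h) \<and>
     (\<forall>c h. eps (sH c h) = c * eps h) \<and>
     (\<forall>h. sum_list (map (\<lambda>(c, us). sH (c * eps (us ! 0)) (us ! 1)) (D h)) = h) \<and>
     (\<forall>h. sum_list (map (\<lambda>(c, us). sH (c * eps (us ! 1)) (us ! 0)) (D h)) = h) \<and>
     \<comment> \<open>coproduct and counit are algebra maps\<close>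
     (\<forall>g h. teq sH (D (g * h)) (tmult (D g) (D h))) \<and>
     teq sH (D 1) [(1, [1, 1])] \<and>
     (\<forall>g h. eps (g * h) = eps g * eps h) \<and>
     eps 1 = 1"

definition is_module_algebra ::
  "('k::comm_ring_1 \<Rightarrow> 'h::ring_1 \<Rightarrow> 'h) \<Rightarrow> ('h \<Rightarrow> ('k, 'h) tens) \<Rightarrow> ('h \<Rightarrow> 'k) \<Rightarrow>
   ('k \<Rightarrow> 'a::ring_1 \<Rightarrow> 'a) \<Rightarrow> ('h \<Rightarrow> 'a \<Rightarrow> 'a) \<Rightarrow> bool" where
  "is_module_algebra sH D eps sA act \<longleftrightarrow>
     is_kalgebra sA \<and>
     \<comment> \<open>k-bilinear left H-module structure\<close>
     (\<forall>g h a. act (g + h) a = act g a + act h a) \<and>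
     (\<forall>h a b. act h (a + b) = act h a + act h b) \<and>
     (\<forall>c h a. act (sH c h) a = sA c (act h a)) \<and>
     (\<forall>c h a. act h (sA c a) = sA c (act h a)) \<and>
     (\<forall>g h a. act (g * h) a = act g (act h a)) \<and>
     (\<forall>a. act 1 a = a) \<and>
     \<comment> \<open>module algebra axioms\<close>
     (\<forall>h a b. act h (a * b) = sum_list (map (\<lambda>(c, us). sA c (act (us ! 0) a * act (us ! 1) b)) (D h))) \<and>
     (\<forall>h. act h 1 = sA (eps h) 1)"

text \<open>Iterated coproduct Delta^(n-1) : H -> H^n, with Delta^(-1) = eps.\<close>
fun iterD :: "('h \<Rightarrow> ('k::comm_ring_1, 'h) tens) \<Rightarrow> ('h \<Rightarrow> 'k) \<Rightarrow> nat \<Rightarrow> 'h \<Rightarrow> ('k, 'h) tens" where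
  "iterD D eps 0 h = [(eps h, [])]"
| "iterD D eps (Suc 0) h = [(1, [h])]"
| "iterD D eps (Suc (Suc k)) h =
     concat (map (\<lambda>(d, us). map (\<lambda>(e, vs). (d * e, (us ! 0) # vs)) (iterD D eps (Suc k) (us ! 1))) (D h))"

text \<open>Partial composition in O_H: x o_i y for x in H^m, y in H^n (1 <= i <= m).\<close>
definition compO :: "('h::ring_1 \<Rightarrow> ('k::comm_ring_1, 'h) tens) \<Rightarrow> ('h \<Rightarrow> 'k) \<Rightarrow>
    nat \<Rightarrow> nat \<Rightarrow> nat \<Rightarrow> ('k, 'h) tens \<Rightarrow> ('k, 'h) tens \<Rightarrow> ('k, 'h) tens" where
  "compO D eps m n i x y =
     concat (map (\<lambda>(c, as). concat (map (\<lambda>(d, bs).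
        map (\<lambda>(e, ds). (c * d * e, take (i - 1) as @ map2 (*) ds bs @ drop i as))
          (iterD D eps n (as ! (i - 1)))) y)) x)"

definition compE :: "nat \<Rightarrow> nat \<Rightarrow> nat \<Rightarrow> ('a list \<Rightarrow> 'a) \<Rightarrow> ('a list \<Rightarrow> 'a) \<Rightarrow> 'a list \<Rightarrow> 'a" where
  "compE m n i f g = (\<lambda>as. f (take (i - 1) as @ [g (take n (drop (i - 1) as))] @ drop (i - 1 + n) as))"

definition multilinear :: "('k::comm_ring_1 \<Rightarrow> 'a::ring_1 \<Rightarrow> 'a) \<Rightarrow> nat \<Rightarrow> ('a list \<Rightarrow> 'a) \<Rightarrow> bool" where
  "multilinear sA n f \<longleftrightarrow>
     (\<forall>xs ys a b. length xs + length ys + 1 = n \<longrightarrow>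
        f (xs @ (a + b) # ys) = f (xs @ a # ys) + f (xs @ b # ys)) \<and>
     (\<forall>xs ys c a. length xs + length ys + 1 = n \<longrightarrow>
        f (xs @ sA c a # ys) = sA c (f (xs @ a # ys)))"

definition Phi :: "('k::comm_ring_1 \<Rightarrow> 'a::ring_1 \<Rightarrow> 'a) \<Rightarrow> ('h \<Rightarrow> 'a \<Rightarrow> 'a) \<Rightarrow> ('k, 'h) tens \<Rightarrow> 'a list \<Rightarrow> 'a" where
  "Phi sA act x = (\<lambda>as. sum_list (map (\<lambda>(c, hs). sA c (prod_list (map2 act hs as))) x))"

text \<open>Generic Gerstenhaber operations of an operad with multiplication, given its
addition, zero, multiplication by signs, partial compositions (cmp m n i f g = f o_i g for
f of arity m and g of arity n) and multiplication mu.\<close>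
definition neg1pow :: "int \<Rightarrow> int" where
  "neg1pow k = (if even k then 1 else -1)"

definition op_d :: "('x \<Rightarrow> 'x \<Rightarrow> 'x) \<Rightarrow> 'x \<Rightarrow> (int \<Rightarrow> 'x \<Rightarrow> 'x) \<Rightarrow>
    (nat \<Rightarrow> nat \<Rightarrow> nat \<Rightarrow> 'x \<Rightarrow> 'x \<Rightarrow> 'x) \<Rightarrow> 'x \<Rightarrow> nat \<Rightarrow> 'x \<Rightarrow> 'x" where
  "op_d add zero sg cmp mu n f =
     add (cmp 2 n 2 mu f)
       (add (foldr add (map (\<lambda>i. sg (neg1pow (int i)) (cmp n 2 i f mu)) [1..<n+1]) zero)
            (sg (neg1pow (int n + 1)) (cmp 2 n 1 mu f)))"

definition op_cup :: "(nat \<Rightarrow> nat \<Rightarrow> nat \<Rightarrow> 'x \<Rightarrow> 'x \<Rightarrow> 'x) \<Rightarrow> 'x \<Rightarrow> nat \<Rightarrow> nat \<Rightarrow> 'x \<Rightarrow> 'x \<Rightarrow> 'x" where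
  "op_cup cmp mu m n f g = cmp (m + 1) n (m + 1) (cmp 2 m 1 mu f) g"

definition op_prelie :: "('x \<Rightarrow> 'x \<Rightarrow> 'x) \<Rightarrow> 'x \<Rightarrow> (int \<Rightarrow> 'x \<Rightarrow> 'x) \<Rightarrow>
    (nat \<Rightarrow> nat \<Rightarrow> nat \<Rightarrow> 'x \<Rightarrow> 'x \<Rightarrow> 'x) \<Rightarrow> nat \<Rightarrow> nat \<Rightarrow> 'x \<Rightarrow> 'x \<Rightarrow> 'x" where
  "op_prelie add zero sg cmp m n f g =
     sg (neg1pow ((int m - 1) * (int n - 1)))
       (foldr add (map (\<lambda>i. sg (neg1pow ((int n - 1) * (int i - 1))) (cmp m n i f g)) [1..<m+1]) zero)"

definition op_bracket :: "('x \<Rightarrow> 'x \<Rightarrow> 'x) \<Rightarrow> 'x \<Rightarrow> (int \<Rightarrow> 'x \<Rightarrow> 'x) \<Rightarrow>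
    (nat \<Rightarrow> nat \<Rightarrow> nat \<Rightarrow> 'x \<Rightarrow> 'x \<Rightarrow> 'x) \<Rightarrow> nat \<Rightarrow> nat \<Rightarrow> 'x \<Rightarrow> 'x \<Rightarrow> 'x" where
  "op_bracket add zero sg cmp m n f g =
     add (op_prelie add zero sg cmp m n f g)
         (sg (- neg1pow ((int m - 1) * (int n - 1))) (op_prelie add zero sg cmp n m g f))"

definition sgO :: "int \<Rightarrow> ('k::comm_ring_1, 'h) tens \<Rightarrow> ('k, 'h) tens" where
  "sgO s x = tscale (of_int s) x"

definition addE :: "('a::ring_1 list \<Rightarrow> 'a) \<Rightarrow> ('a list \<Rightarrow> 'a) \<Rightarrow> 'a list \<Rightarrow> 'a" where
  "addE f g = (\<lambda>as. f as + g as)"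

definition sgE :: "('k::comm_ring_1 \<Rightarrow> 'a::ring_1 \<Rightarrow> 'a) \<Rightarrow> int \<Rightarrow> ('a list \<Rightarrow> 'a) \<Rightarrow> 'a list \<Rightarrow> 'a" where
  "sgE sA s f = (\<lambda>as. sA (of_int s) (f as))"

definition muE :: "'a::ring_1 list \<Rightarrow> 'a" where
  "muE as = as ! 0 * as ! 1"

definition muO :: "('k::comm_ring_1, 'h::ring_1) tens" where
  "muO = [(1, [1, 1])]"

end

theory Submission imports Defs begin

locale MA =
  fixes sH :: "'k::comm_ring_1 \<Rightarrow> 'h::ring_1 \<Rightarrow> 'h"
    and D :: "'h \<Rightarrow> ('k, 'h) tens" and eps :: "'h \<Rightarrow> 'k"
    and sA :: "'k \<Rightarrow> 'a::ring_1 \<Rightarrow> 'a" and act :: "'h \<Rightarrow> 'a \<Rightarrow> 'a"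
  assumes MA: "is_module_algebra sH D eps sA act"
begin

lemma sA_addl: "sA (c + d) x = sA c x + sA d x"
  using MA unfolding is_module_algebra_def is_kalgebra_def is_kmodule_def by simp
lemma sA_addr: "sA c (x + y) = sA c x + sA c y"
  using MA unfolding is_module_algebra_def is_kalgebra_def is_kmodule_def by simp
lemma sA_sA[simp]: "sA c (sA d x) = sA (c * d) x"
  using MA unfolding is_module_algebra_def is_kalgebra_def is_kmodule_def by metis
lemma sA_one[simp]: "sA 1 x = x"
  using MA unfolding is_module_algebra_def is_kalgebra_def is_kmodule_def by simp
lemma sA_ml[simp]: "sA c x * y = sA c (x * y)"
  using MA unfolding is_module_algebra_def is_kalgebra_def by metis
lemma sA_mr[simp]: "x * sA c y = sA c (x * y)"
  using MA unfolding is_module_algebra_def is_kalgebra_def by metis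
lemma act_addl: "act (g + h) a = act g a + act h a"
  using MA unfolding is_module_algebra_def by simp
lemma act_addr[simp]: "act h (a + b) = act h a + act h b"
  using MA unfolding is_module_algebra_def by simp
lemma act_sH[simp]: "act (sH c h) a = sA c (act h a)"
  using MA unfolding is_module_algebra_def by simp
lemma act_sA[simp]: "act h (sA c a) = sA c (act h a)"
  using MA unfolding is_module_algebra_def by simp
lemma act_mult: "act (g * h) a = act g (act h a)"
  using MA unfolding is_module_algebra_def by simp
lemma act_one[simp]: "act 1 a = a"
  using MA unfolding is_module_algebra_def by simp
lemma act_prod: "act h (a * b) = sum_list (map (\<lambda>(c, us). sA c (act (us ! 0) a * act (us ! 1) b)) (D h))"
  using MA unfolding is_module_algebra_def by simp
lemma act_unit: "act h 1 = sA (eps h) 1"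
  using MA unfolding is_module_algebra_def by simp

lemma sA_zr[simp]: "sA c 0 = 0" using sA_addr[of c 0 0] by simp
lemma sA_zl[simp]: "sA 0 x = 0" using sA_addl[of 0 0 x] by simp
lemma sA_minusl: "sA (-c) x = - sA c x"
  using sA_addl[of c "-c" x] by (simp add: eq_neg_iff_add_eq_0 add.commute)
lemma sA_diffl: "sA (c - d) x = sA c x - sA d x"
  using sA_addl[of c "-d" x] sA_minusl[of d x] by simp
lemma sA_sum: "sA c (sum_list xs) = sum_list (map (sA c) xs)"
  by (induct xs) (auto simp: sA_addr)
lemma act_z[simp]: "act h 0 = 0" using act_addr[of h 0 0] by simp

definition F :: "'h list \<Rightarrow> 'a list \<Rightarrow> 'a" where
  "F hs as = prod_list (map2 act hs as)"

lemma Phi_eq: "Phi sA act x as = sum_list (map (\<lambda>(c, hs). sA c (F hs as)) x)"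
  unfolding Phi_def F_def by simp
lemma Phi_Nil[simp]: "Phi sA act [] as = 0" by (simp add: Phi_eq)
lemma Phi_Cons[simp]: "Phi sA act ((c,hs) # x) as = sA c (F hs as) + Phi sA act x as"
  by (simp add: Phi_eq)
lemma Phi_append: "Phi sA act (x @ y) as = Phi sA act x as + Phi sA act y as"
  by (simp add: Phi_eq)
lemma Phi_concat: "Phi sA act (concat xs) as = sum_list (map (\<lambda>x. Phi sA act x as) xs)"
  by (induct xs) (auto simp: Phi_append)

lemma F_append: "length a = length c \<Longrightarrow> F (a @ b) (c @ d) = F a c * F b d"
  by (simp add: F_def)

lemma F_slot: assumes "length xs < length hs"
  shows "F hs (xs @ a # ys) = F (take (length xs) hs) xs * act (hs ! length xs) a * F (drop (Suc (length xs)) hs) ys"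
proof -
  have "hs = take (length xs) hs @ (hs ! length xs) # drop (Suc (length xs)) hs"
    using assms by (simp add: id_take_nth_drop)
  then have "F hs (xs @ a # ys) = F (take (length xs) hs @ (hs ! length xs) # drop (Suc (length xs)) hs) (xs @ a # ys)"
    by simp
  also have "\<dots> = F (take (length xs) hs) xs * act (hs ! length xs) a * F (drop (Suc (length xs)) hs) ys"
    using assms by (subst F_append) (auto simp: F_def mult.assoc)
  finally show ?thesis .
qed

lemma F_add: "length xs < length hs \<Longrightarrow> F hs (xs @ (a + b) # ys) = F hs (xs @ a # ys) + F hs (xs @ b # ys)"
  by (simp add: F_slot distrib_left distrib_right)
lemma F_zero: "length xs < length hs \<Longrightarrow> F hs (xs @ 0 # ys) = 0"
  by (simp add: F_slot)
lemma F_smul: "length xs < length hs \<Longrightarrow> F hs (xs @ sA c a # ys) = sA c (F hs (xs @ a # ys))"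
  by (simp add: F_slot)

lemma F_sum: "length xs < length hs \<Longrightarrow>
   sA c (F hs (xs @ sum_list (map g y) # ys)) = sum_list (map (\<lambda>q. sA c (F hs (xs @ g q # ys))) y)"
  by (induct y) (simp_all add: F_add F_zero sA_addr)

lemma multilin: "tarity n x \<Longrightarrow> multilinear sA n (Phi sA act x)"
  unfolding multilinear_def
proof (induct x)
  case Nil then show ?case by simp
next
  case (Cons p x)
  obtain c hs where p: "p = (c, hs)" by force
  from Cons.prems have l: "length hs = n" and t: "tarity n x" by (auto simp: tarity_def p)
  show ?case using Cons.hyps[OF t] l
    by (auto simp: p F_add F_smul sA_addr mult.commute)
qed


lemma iterD_len: "(e, ds) \<in> set (iterD D eps n h) \<Longrightarrow> length ds = n"
  by (induction D eps n h arbitrary: e ds rule: iterD.induct) auto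

lemma sum_list_concat': "sum_list (concat xss) = sum_list (map sum_list xss)"
  by (induct xss) auto

lemma sum_aux1: "sA c (a * sum_list (map (\<lambda>(e, vs). sA e (G vs)) l))
   = sum_list (map (\<lambda>(e, vs). sA (c * e) (a * G vs)) l)"
  by (induct l) (auto simp: distrib_left sA_addr)

lemma act_prod_iter: "length zs = n \<Longrightarrow>
   act h (prod_list zs) = sum_list (map (\<lambda>(e, ds). sA e (F ds zs)) (iterD D eps n h))"
proof (induction n arbitrary: h zs)
  case 0 then show ?case using act_unit by (simp add: F_def)
next
  case (Suc n')
  show ?case
  proof (cases n')
    case 0 then show ?thesis using Suc.prems by (auto simp: F_def length_Suc_conv)
  next
    case (Suc k)
  from Suc have nk: "n' = Suc k" .
  from Suc.prems[unfolded nk] obtain z zs' where zs: "zs = z # zs'" and l: "length zs' = Suc k"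
    by (auto simp: length_Suc_conv)
  have IH: "\<And>h. act h (prod_list zs') = sum_list (map (\<lambda>(e, ds). sA e (F ds zs')) (iterD D eps (Suc k) h))"
    using Suc.IH l nk by simp
  have "act h (prod_list zs) = sum_list (map (\<lambda>(c, us). sA c (act (us ! 0) z * act (us ! 1) (prod_list zs'))) (D h))"
    by (simp add: zs act_prod)
  also have "\<dots> = sum_list (map (\<lambda>(c, us). sA c (act (us ! 0) z *
       sum_list (map (\<lambda>(e, vs). sA e (F vs zs')) (iterD D eps (Suc k) (us ! 1))))) (D h))"
    by (simp only: IH)
  also have "\<dots> = sum_list (map (\<lambda>(c, us). sum_list (map (\<lambda>(e, vs). sA (c * e) (act (us ! 0) z * F vs zs'))
        (iterD D eps (Suc k) (us ! 1)))) (D h))"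
    by (simp only: sum_aux1 case_prod_beta)
  also have "\<dots> = sum_list (map (\<lambda>(e, ds). sA e (F ds zs)) (iterD D eps (Suc (Suc k)) h))"
    by (simp add: zs map_concat sum_list_concat' comp_def case_prod_beta F_def split_def)
  finally show ?thesis using nk by simp
  qed
qed


lemma map2_mult_act: "length ds = length bs \<Longrightarrow> length bs = length zs \<Longrightarrow>
   map2 act (map2 (*) ds bs) zs = map2 act ds (map2 act bs zs)"
  by (simp add: list_eq_iff_nth_eq act_mult)

lemma sum_aux2: "sA c (P1 * sA d (sum_list (map (\<lambda>(e, ds). sA e (G ds)) l)) * P3)
   = sum_list (map (\<lambda>(e, ds). sA (c * d * e) (P1 * G ds * P3)) l)"
  by (induct l) (auto simp: distrib_left distrib_right sA_addr mult.assoc)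

lemma comp_single:
  assumes hs: "length hs = m" and bs: "length bs = n" and i: "1 \<le> i" "i \<le> m"
    and as: "length as = m + n - 1"
  shows "Phi sA act (compO D eps m n i [(c, hs)] [(d, bs)]) as
       = sA c (F hs (take (i - 1) as @ [sA d (F bs (take n (drop (i - 1) as)))] @ drop (i - 1 + n) as))"
proof -
  define as1 where "as1 = take (i - 1) as"
  define as2 where "as2 = take n (drop (i - 1) as)"
  define as3 where "as3 = drop (i - 1 + n) as"
  have asd: "as = as1 @ as2 @ as3" unfolding as1_def as2_def as3_def
    by (metis append_take_drop_id drop_drop add.commute)
  have l1: "length as1 = i - 1" and l2: "length as2 = n" using as i unfolding as1_def as2_def by auto
  let ?h = "hs ! (i - 1)"
  let ?P1 = "F (take (i - 1) hs) as1"
  let ?P3 = "F (drop i hs) as3"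
  have "compO D eps m n i [(c, hs)] [(d, bs)] =
     map (\<lambda>(e, ds). (c * d * e, take (i - 1) hs @ map2 (*) ds bs @ drop i hs)) (iterD D eps n ?h)"
    by (simp add: compO_def case_prod_beta)
  then have "Phi sA act (compO D eps m n i [(c, hs)] [(d, bs)]) as =
     sum_list (map (\<lambda>(e, ds). sA (c * d * e) (?P1 * F ds (map2 act bs as2) * ?P3)) (iterD D eps n ?h))"
    unfolding Phi_eq
    apply simp
    apply (rule arg_cong[where f=sum_list], rule map_cong[OF refl])
    apply (clarsimp simp: asd)
    apply (frule iterD_len)
    apply (subst F_append, use hs i l1 in simp)
    apply (subst F_append, use bs l2 in simp)
    apply (simp add: F_def map2_mult_act bs l2 mult.assoc)
    done
  also have "\<dots> = sA c (?P1 * sA d (act ?h (prod_list (map2 act bs as2))) * ?P3)"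
  proof -
    have eq: "act ?h (prod_list (map2 act bs as2)) = sum_list (map (\<lambda>(e, ds). sA e (F ds (map2 act bs as2))) (iterD D eps n ?h))"
      by (rule act_prod_iter) (simp add: bs l2)
    show ?thesis by (simp only: eq sum_aux2)
  qed
  also have "\<dots> = sA c (F hs (as1 @ [sA d (F bs as2)] @ as3))"
  proof -
    have "F hs (as1 @ [sA d (F bs as2)] @ as3) = ?P1 * act ?h (sA d (F bs as2)) * ?P3"
      using F_slot[of as1 hs "sA d (F bs as2)" as3] hs i l1 by simp
    then show ?thesis by (simp add: F_def)
  qed
  finally show ?thesis unfolding as1_def as2_def as3_def .
qed


lemma compO_split: "compO D eps m n i x y = concat (map (\<lambda>p. concat (map (\<lambda>q. compO D eps m n i [p] [q]) y)) x)"
  by (simp add: compO_def split_def)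

lemma comp_gen:
  assumes x: "tarity m x" and y: "tarity n y" and i: "1 \<le> i" "i \<le> m"
    and as: "length as = m + n - 1"
  shows "Phi sA act (compO D eps m n i x y) as = compE m n i (Phi sA act x) (Phi sA act y) as"
  using x
proof (induct x)
  case Nil then show ?case by (simp add: compO_def compE_def)
next
  case (Cons p x)
  obtain c hs where p: "p = (c, hs)" by force
  from Cons.prems have hs: "length hs = m" and t: "tarity m x" by (auto simp: tarity_def p)
  let ?as1 = "take (i - 1) as" and ?as2 = "take n (drop (i - 1) as)" and ?as3 = "drop (i - 1 + n) as"
  have l1: "length ?as1 < length hs" using hs i as by simp
  have "Phi sA act (concat (map (\<lambda>q. compO D eps m n i [p] [q]) y)) as
       = sum_list (map (\<lambda>q. sA c (F hs (?as1 @ (case q of (d, bs) \<Rightarrow> sA d (F bs ?as2)) # ?as3))) y)"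
    unfolding Phi_concat using y
  proof (induct y)
    case (Cons q y)
    obtain d bs where q: "q = (d, bs)" by force
    from Cons.prems have bs: "length bs = n" and t: "tarity n y" by (auto simp: tarity_def q)
    show ?case using Cons.hyps[OF t] comp_single[OF hs bs i as, of c d] by (simp add: p q)
  qed simp
  also have "\<dots> = sA c (F hs (?as1 @ Phi sA act y ?as2 # ?as3))"
    unfolding Phi_eq by (rule F_sum[OF l1, symmetric])
  finally have "Phi sA act (concat (map (\<lambda>q. compO D eps m n i [p] [q]) y)) as
     = sA c (F hs (?as1 @ Phi sA act y ?as2 # ?as3))" .
  moreover have "Phi sA act (compO D eps m n i x y) as = compE m n i (Phi sA act x) (Phi sA act y) as"
    using Cons.hyps[OF t] .
  ultimately show ?case
    by (subst compO_split) (simp add: Phi_append compE_def p compO_split[of m n i x y, symmetric])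
qed

lemma tarity_compO:
  assumes x: "tarity m x" and y: "tarity n y" and i: "1 \<le> i" "i \<le> m"
  shows "tarity (m + n - 1) (compO D eps m n i x y)"
  using x y i unfolding tarity_def compO_def
  by (force dest: iterD_len)


lemma F_hslot: assumes "length xs < length as"
  shows "F (xs @ h # ys) as = F xs (take (length xs) as) * act h (as ! length xs) * F ys (drop (Suc (length xs)) as)"
proof -
  have "as = take (length xs) as @ (as ! length xs) # drop (Suc (length xs)) as"
    using assms by (simp add: id_take_nth_drop)
  then have "F (xs @ h # ys) as = F (xs @ h # ys) (take (length xs) as @ (as ! length xs) # drop (Suc (length xs)) as)"
    by simp
  also have "\<dots> = F xs (take (length xs) as) * act h (as ! length xs) * F ys (drop (Suc (length xs)) as)"
    using assms by (subst F_append) (auto simp: F_def mult.assoc)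
  finally show ?thesis .
qed

definition LT where
  "LT n as T u = (\<Sum>t\<in>T. sA (u t) (if length t = n then F t as else 0))"

lemma sA_setsum: "finite T \<Longrightarrow> sA c (\<Sum>t\<in>T. f t) = (\<Sum>t\<in>T. sA c (f t))"
  by (induct T rule: finite_induct) (auto simp: sA_addr)

lemma LT_add: "LT n as T (\<lambda>t. u t + v t) = LT n as T u + LT n as T v"
  unfolding LT_def by (simp add: sum.distrib[symmetric] sA_addl)
lemma LT_diff: "LT n as T (\<lambda>t. u t - v t) = LT n as T u - LT n as T v"
  unfolding LT_def by (simp add: sum_subtractf[symmetric] sA_diffl)
lemma LT_smult: "finite T \<Longrightarrow> LT n as T (\<lambda>t. c * u t) = sA c (LT n as T u)"
  unfolding LT_def by (simp add: sA_setsum)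
lemma LT_zero: "LT n as T (\<lambda>t. 0) = 0"
  unfolding LT_def by simp
lemma LT_basis: "finite T \<Longrightarrow> p \<in> T \<Longrightarrow> LT n as T (basis p) = (if length p = n then F p as else 0)"
proof -
  assume T: "finite T" "p \<in> T"
  have "LT n as T (basis p) = (\<Sum>t\<in>T. if t = p then (if length p = n then F p as else 0) else 0)"
    unfolding LT_def by (rule sum.cong) (auto simp: basis_def)
  also have "\<dots> = (if length p = n then F p as else 0)" using T by simp
  finally show ?thesis .
qed
lemma LT_ext: "finite T' \<Longrightarrow> T \<subseteq> T' \<Longrightarrow> (\<forall>t\<in>T' - T. u t = 0) \<Longrightarrow> LT n as T' u = LT n as T u"
  unfolding LT_def by (rule sum.mono_neutral_right) auto

lemma LT_ext2: "finite T' \<Longrightarrow> T \<subseteq> T' \<Longrightarrow> {t. u t \<noteq> 0} \<subseteq> T \<Longrightarrow> LT n as T' u = LT n as T u"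
  by (rule LT_ext) blast+

lemma rel_zero:
  assumes "u \<in> tens_rel sH" and las: "length as = n"
  shows "finite {t. u t \<noteq> 0} \<and> (\<forall>T. finite T \<longrightarrow> {t. u t \<noteq> 0} \<subseteq> T \<longrightarrow> LT n as T u = 0)"
  using assms(1)
proof (induct rule: tens_rel.induct)
  case zero then show ?case by (simp add: LT_zero)
next
  case (add u v)
  from add have fu: "finite {t. u t \<noteq> 0}" and fv: "finite {t. v t \<noteq> 0}"
    and Lu: "\<And>T. finite T \<Longrightarrow> {t. u t \<noteq> 0} \<subseteq> T \<Longrightarrow> LT n as T u = 0"
    and Lv: "\<And>T. finite T \<Longrightarrow> {t. v t \<noteq> 0} \<subseteq> T \<Longrightarrow> LT n as T v = 0" by blast+
  have fin: "finite {t. u t + v t \<noteq> 0}"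
    by (rule finite_subset[of _ "{t. u t \<noteq> 0} \<union> {t. v t \<noteq> 0}"]) (use fu fv in \<open>auto\<close>)
  show ?case
  proof (intro conjI allI impI fin)
    fix T assume T: "finite T" "{t. u t + v t \<noteq> 0} \<subseteq> T"
    let ?T = "T \<union> {t. u t \<noteq> 0} \<union> {t. v t \<noteq> 0}"
    have fT: "finite ?T" using T fu fv by blast
    have "LT n as T (\<lambda>t. u t + v t) = LT n as ?T (\<lambda>t. u t + v t)"
      by (rule LT_ext[symmetric]) (use fT T in blast)+
    also have "\<dots> = LT n as ?T u + LT n as ?T v" by (rule LT_add)
    also have "\<dots> = 0" using Lu[OF fT] Lv[OF fT] by auto
    finally show "LT n as T (\<lambda>t. u t + v t) = 0" .
  qed
next
  case (smult u c)
  from smult have fu: "finite {t. u t \<noteq> 0}"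
    and Lu: "\<And>T. finite T \<Longrightarrow> {t. u t \<noteq> 0} \<subseteq> T \<Longrightarrow> LT n as T u = 0" by blast+
  have fin: "finite {t. c * u t \<noteq> 0}"
    by (rule finite_subset[of _ "{t. u t \<noteq> 0}"]) (use fu in \<open>auto\<close>)
  show ?case
  proof (intro conjI allI impI fin)
    fix T assume T: "finite T" "{t. c * u t \<noteq> 0} \<subseteq> T"
    let ?T = "T \<union> {t. u t \<noteq> 0}"
    have fT: "finite ?T" using T fu by blast
    have "LT n as T (\<lambda>t. c * u t) = LT n as ?T (\<lambda>t. c * u t)"
      by (rule LT_ext[symmetric]) (use fT T in blast)+
    also have "\<dots> = sA c (LT n as ?T u)" by (rule LT_smult[OF fT])
    also have "\<dots> = 0" using Lu[OF fT] by simp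
    finally show "LT n as T (\<lambda>t. c * u t) = 0" .
  qed
next
  case (addgen xs a b ys)
  let ?p = "xs @ (a + b) # ys" and ?q = "xs @ a # ys" and ?r = "xs @ b # ys"
  let ?u = "(\<lambda>t. basis ?p t - basis ?q t - basis ?r t) :: 'h list \<Rightarrow> 'k"
  have fin: "finite {t. ?u t \<noteq> 0}"
    by (rule finite_subset[of _ "{?p, ?q, ?r}"]) (auto simp: basis_def)
  show ?case
  proof (intro conjI allI impI fin)
    fix T assume T: "finite T" "{t. ?u t \<noteq> 0} \<subseteq> T"
    let ?T = "T \<union> {?p, ?q, ?r}"
    have "LT n as T ?u = LT n as ?T ?u"
      by (rule LT_ext2[symmetric], simp add: T(1), blast, rule T(2))
    also have "\<dots> = LT n as ?T (\<lambda>t. basis ?p t - basis ?q t) - LT n as ?T (basis ?r)"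
      using LT_diff[of n as ?T "\<lambda>t. basis ?p t - basis ?q t" "basis ?r"] by simp
    also have "\<dots> = 0"
    proof (cases "length ?p = n")
      case True
      then have "length xs < length as" using las by simp
      then show ?thesis using T True by (simp add: LT_diff LT_basis F_hslot distrib_left distrib_right act_addl)
    next
      case False then show ?thesis using T by (simp add: LT_diff LT_basis)
    qed
    finally show "LT n as T ?u = 0" .
  qed
next
  case (smultgen xs c a ys)
  let ?p = "xs @ sH c a # ys" and ?q = "xs @ a # ys"
  let ?u = "(\<lambda>t. basis ?p t - c * basis ?q t) :: 'h list \<Rightarrow> 'k"
  have fin: "finite {t. ?u t \<noteq> 0}"
    by (rule finite_subset[of _ "{?p, ?q}"]) (auto simp: basis_def)
  show ?case
  proof (intro conjI allI impI fin)
    fix T assume T: "finite T" "{t. ?u t \<noteq> 0} \<subseteq> T"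
    let ?T = "T \<union> {?p, ?q}"
    have "LT n as T ?u = LT n as ?T ?u"
      by (rule LT_ext2[symmetric], simp add: T(1), blast, rule T(2))
    also have "\<dots> = LT n as ?T (basis ?p) - LT n as ?T (\<lambda>t. c * basis ?q t)"
      by (rule LT_diff)
    also have "\<dots> = 0"
    proof (cases "length ?p = n")
      case True
      then have "length xs < length as" using las by simp
      then show ?thesis using T True by (simp add: LT_smult LT_basis F_hslot)
    next
      case False then show ?thesis using T by (simp add: LT_smult LT_basis)
    qed
    finally show "LT n as T ?u = 0" .
  qed
qed

lemma fs_Nil: "fs [] = (\<lambda>t. 0)" by (simp add: fs_def fun_eq_iff)
lemma fs_Cons: "fs ((c, hs) # x) = (\<lambda>t. c * basis hs t + fs x t)"
  by (auto simp: fs_def basis_def fun_eq_iff)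
lemma fs_supp: "{t. fs x t \<noteq> 0} \<subseteq> set (map snd x)"
proof
  fix t assume "t \<in> {t. fs x t \<noteq> 0}"
  then have "filter (\<lambda>p. snd p = t) x \<noteq> []" by (auto simp: fs_def)
  then show "t \<in> set (map snd x)" by (auto simp: filter_empty_conv)
qed

lemma Phi_LT: "tarity n x \<Longrightarrow> finite T \<Longrightarrow> set (map snd x) \<subseteq> T \<Longrightarrow> Phi sA act x as = LT n as T (fs x)"
proof (induct x)
  case Nil then show ?case by (simp add: fs_Nil LT_zero)
next
  case (Cons p x)
  obtain c hs where p: "p = (c, hs)" by force
  from Cons.prems have l: "length hs = n" and t: "tarity n x" by (auto simp: tarity_def p)
  show ?case using Cons.hyps[OF t] Cons.prems l
    by (simp add: p fs_Cons LT_add LT_smult LT_basis)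
qed

lemma teq_Phi:
  assumes x: "tarity n x" and y: "tarity n y" and e: "teq sH x y" and as: "length as = n"
  shows "Phi sA act x as = Phi sA act y as"
proof -
  let ?T = "set (map snd x) \<union> set (map snd y)"
  have "Phi sA act x as - Phi sA act y as = LT n as ?T (\<lambda>t. fs x t - fs y t)"
    using Phi_LT[OF x, of ?T as] Phi_LT[OF y, of ?T as] by (simp add: LT_diff)
  also have "\<dots> = 0"
  proof -
    have s: "{t. fs x t - fs y t \<noteq> 0} \<subseteq> ?T" using fs_supp[of x] fs_supp[of y] by fastforce
    have "finite ?T" by simp
    then show ?thesis using rel_zero[OF e[unfolded teq_def] as] s by blast
  qed
  finally show ?thesis by simp
qed


lemma Phi_tscale: "Phi sA act (tscale c x) as = sA c (Phi sA act x as)"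
  by (induct x) (auto simp: tscale_def sA_addr)

lemma Phi_sgO: "Phi sA act (sgO s x) as = sgE sA s (Phi sA act x) as"
  by (simp add: sgO_def sgE_def Phi_tscale)

lemma Phi_foldr: "(\<And>i. i \<in> set l \<Longrightarrow> Phi sA act (f i) as = g i as) \<Longrightarrow>
   Phi sA act (foldr (@) (map f l) []) as = foldr addE (map g l) (\<lambda>_. 0) as"
  by (induct l) (auto simp: Phi_append addE_def)

lemma Phi_muO: "length l = 2 \<Longrightarrow> Phi sA act muO l = muE l"
  by (cases l rule: list.exhaust; cases "tl l") (auto simp: muO_def muE_def F_def)

lemma tarity_muO: "tarity 2 muO" by (simp add: muO_def tarity_def)

lemma compE_cong: "(\<And>l. length l = m \<Longrightarrow> f l = f' l) \<Longrightarrow> (\<And>l. length l = n \<Longrightarrow> g l = g' l) \<Longrightarrow>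
   length as = m + n - 1 \<Longrightarrow> 1 \<le> i \<Longrightarrow> i \<le> m \<Longrightarrow> compE m n i f g as = compE m n i f' g' as"
  unfolding compE_def by simp

lemma comp_muE1: "tarity m x \<Longrightarrow> 1 \<le> i \<Longrightarrow> i \<le> m \<Longrightarrow> length as = m + 1 \<Longrightarrow>
   Phi sA act (compO D eps m 2 i x muO) as = compE m 2 i (Phi sA act x) muE as"
  by (subst comp_gen[OF _ tarity_muO]) (auto intro!: compE_cong Phi_muO)

lemma comp_muE2: "tarity n x \<Longrightarrow> 1 \<le> i \<Longrightarrow> i \<le> 2 \<Longrightarrow> length as = n + 1 \<Longrightarrow>
   Phi sA act (compO D eps 2 n i muO x) as = compE 2 n i muE (Phi sA act x) as"
  by (subst comp_gen[OF tarity_muO]) (auto intro!: compE_cong Phi_muO)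

lemma d_ok: "tarity n x \<Longrightarrow> length as = n + 1 \<Longrightarrow>
   Phi sA act (op_d (@) [] sgO (compO D eps) muO n x) as
        = op_d addE (\<lambda>_. 0) (sgE sA) compE muE n (Phi sA act x) as"
proof -
  assume x: "tarity n x" and as: "length as = n + 1"
  have 1: "Phi sA act (compO D eps 2 n 2 muO x) as = compE 2 n 2 muE (Phi sA act x) as"
    using comp_muE2[OF x _ _ as] by simp
  have 2: "Phi sA act (foldr (@) (map (\<lambda>i. sgO (neg1pow (int i)) (compO D eps n 2 i x muO)) [1..<n+1]) []) as
     = foldr addE (map (\<lambda>i. sgE sA (neg1pow (int i)) (compE n 2 i (Phi sA act x) muE)) [1..<n+1]) (\<lambda>_. 0) as"
    by (rule Phi_foldr) (use x as in \<open>auto simp: Phi_sgO sgE_def comp_muE1\<close>)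
  have 3: "Phi sA act (sgO (neg1pow (int n + 1)) (compO D eps 2 n 1 muO x)) as
     = sgE sA (neg1pow (int n + 1)) (compE 2 n 1 muE (Phi sA act x)) as"
    using comp_muE2[OF x _ _ as, of 1] by (simp add: Phi_sgO sgE_def)
  show ?thesis by (simp only: op_d_def Phi_append 1 2 3 addE_def)
qed

lemma cup_ok: "tarity m x \<Longrightarrow> tarity n y \<Longrightarrow> length as = m + n \<Longrightarrow>
   Phi sA act (op_cup (compO D eps) muO m n x y) as
        = op_cup compE muE m n (Phi sA act x) (Phi sA act y) as"
proof -
  assume x: "tarity m x" and y: "tarity n y" and as: "length as = m + n"
  have tX: "tarity (m + 1) (compO D eps 2 m 1 muO x)"
    using tarity_compO[OF tarity_muO x, of 1] by simp
  show ?thesis unfolding op_cup_def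
    by (subst comp_gen[OF tX y]) (use as in \<open>auto intro!: compE_cong comp_muE2 x\<close>)
qed

lemma prelie_ok: "tarity m x \<Longrightarrow> tarity n y \<Longrightarrow> length as = m + n - 1 \<Longrightarrow>
   Phi sA act (op_prelie (@) [] sgO (compO D eps) m n x y) as
        = op_prelie addE (\<lambda>_. 0) (sgE sA) compE m n (Phi sA act x) (Phi sA act y) as"
proof -
  assume x: "tarity m x" and y: "tarity n y" and as: "length as = m + n - 1"
  have 2: "Phi sA act (foldr (@) (map (\<lambda>i. sgO (neg1pow ((int n - 1) * (int i - 1))) (compO D eps m n i x y)) [1..<m+1]) []) as
     = foldr addE (map (\<lambda>i. sgE sA (neg1pow ((int n - 1) * (int i - 1))) (compE m n i (Phi sA act x) (Phi sA act y))) [1..<m+1]) (\<lambda>_. 0) as"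
    by (rule Phi_foldr) (use x y as in \<open>auto simp: Phi_sgO sgE_def comp_gen\<close>)
  show ?thesis by (simp only: op_prelie_def Phi_sgO sgE_def 2)
qed

lemma bracket_ok: "tarity m x \<Longrightarrow> tarity n y \<Longrightarrow> length as = m + n - 1 \<Longrightarrow>
   Phi sA act (op_bracket (@) [] sgO (compO D eps) m n x y) as
        = op_bracket addE (\<lambda>_. 0) (sgE sA) compE m n (Phi sA act x) (Phi sA act y) as"
  unfolding op_bracket_def
  by (simp add: Phi_append addE_def Phi_sgO sgE_def prelie_ok add.commute[of n m])

end

theorem lemma7p1:
  fixes sH :: "'k::comm_ring_1 \<Rightarrow> 'h::ring_1 \<Rightarrow> 'h"
    and D :: "'h \<Rightarrow> ('k, 'h) tens" and eps :: "'h \<Rightarrow> 'k"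
    and sA :: "'k \<Rightarrow> 'a::ring_1 \<Rightarrow> 'a" and act :: "'h \<Rightarrow> 'a \<Rightarrow> 'a"
  assumes "is_bialgebra sH D eps"
    and "is_module_algebra sH D eps sA act"
  shows
    "(\<forall>n x. tarity n x \<longrightarrow> multilinear sA n (Phi sA act x))
   \<and> (\<forall>n x y. tarity n x \<longrightarrow> tarity n y \<longrightarrow> teq sH x y \<longrightarrow>
        (\<forall>as. length as = n \<longrightarrow> Phi sA act x as = Phi sA act y as))
   \<and> (\<forall>x y as. Phi sA act (x @ y) as = Phi sA act x as + Phi sA act y as)
   \<and> (\<forall>c x as. Phi sA act (tscale c x) as = sA c (Phi sA act x as))
   \<and> (\<forall>a. Phi sA act [(1, [1])] [a] = a)
   \<and> (\<forall>a b. Phi sA act muO [a, b] = muE [a, b])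
   \<and> Phi sA act [(1, [])] [] = 1
   \<and> (\<forall>m n i x y. tarity m x \<longrightarrow> tarity n y \<longrightarrow> 1 \<le> i \<longrightarrow> i \<le> m \<longrightarrow>
        (\<forall>as. length as = m + n - 1 \<longrightarrow>
           Phi sA act (compO D eps m n i x y) as = compE m n i (Phi sA act x) (Phi sA act y) as))
   \<and> (\<forall>n x. tarity n x \<longrightarrow> (\<forall>as. length as = n + 1 \<longrightarrow>
        Phi sA act (op_d (@) [] sgO (compO D eps) muO n x) as
        = op_d addE (\<lambda>_. 0) (sgE sA) compE muE n (Phi sA act x) as))
   \<and> (\<forall>m n x y. tarity m x \<longrightarrow> tarity n y \<longrightarrow> (\<forall>as. length as = m + n \<longrightarrow>
        Phi sA act (op_cup (compO D eps) muO m n x y) as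
        = op_cup compE muE m n (Phi sA act x) (Phi sA act y) as))
   \<and> (\<forall>m n x y. tarity m x \<longrightarrow> tarity n y \<longrightarrow> (\<forall>as. length as = m + n - 1 \<longrightarrow>
        Phi sA act (op_bracket (@) [] sgO (compO D eps) m n x y) as
        = op_bracket addE (\<lambda>_. 0) (sgE sA) compE m n (Phi sA act x) (Phi sA act y) as))"
proof -
  interpret MA sH D eps sA act by (rule MA.intro) (rule assms(2))
  show ?thesis
    by (intro conjI allI impI)
       (simp_all add: multilin teq_Phi Phi_append Phi_tscale Phi_muO comp_gen d_ok cup_ok bracket_ok F_def)
qed

end
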